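(* Let $p\ge1$ and suppose $\mathbb{E}[\|Z\|^{2p}]<\infty$. Then (i) $\mathbb{E}[A_n^p]=O(n^{3p/2})$ as $n\to\infty$; (ii) if moreover $\mu=0$, then $\mathbb{E}[A_n^p]=O(n^p)$.
   Context: $Z$ is a random vector in $\mathbb{R}^2$ with $\mathbb{E}[\|Z\|^2]<\infty$; $Z_1,Z_2,\ldots$ are i.i.d. copies of $Z$; $S_0=0$, $S_n=\sum_{k=1}^n Z_k$; $\mu=\mathbb{E}Z$. $A_n$ is the area of the convex hull of $\{S_0,\ldots,S_n\}$. *)

theory Defs
  imports "HOL-Probability.Probability" "HOL-Library.Landau_Symbols"
begin

text \<open>Random walk S_n = Z_1 + ... + Z_n, with the i.i.d. steps indexed from 0:
  S n = Z 0 + ... + Z (n-1).\<close>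
definition walk :: "(nat \<Rightarrow> 'a \<Rightarrow> real^2) \<Rightarrow> nat \<Rightarrow> 'a \<Rightarrow> real^2" where
  "walk Z n \<omega> = (\<Sum>k<n. Z k \<omega>)"

definition hull_area :: "(nat \<Rightarrow> 'a \<Rightarrow> real^2) \<Rightarrow> nat \<Rightarrow> 'a \<Rightarrow> real" where
  "hull_area Z n \<omega> = measure lborel (convex hull {walk Z k \<omega> | k. k \<le> n})"

end

theory Submission
  imports Defs
begin

lemma young_w:
  fixes a b \<theta> :: real
  assumes "a \<ge> 0" "b \<ge> 0" "0 \<le> \<theta>" "\<theta> \<le> 1"
  shows "a powr \<theta> * b powr (1-\<theta>) \<le> \<theta>*a + (1-\<theta>)*b"
proof (cases "a = 0 \<or> b = 0")
  case True then show ?thesis using assms by auto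
next
  case False then show ?thesis using Youngs_inequality_0[of \<theta> "1-\<theta>" a b] assms by auto
qed

definition psi :: "real \<Rightarrow> real \<Rightarrow> real" where
  "psi q b = sgn b * \<bar>b\<bar> powr (q-1)"

lemma powr_split1:
  fixes b q :: real assumes "b \<ge> 0" shows "b powr q = b powr (q-1) * b"
proof (cases "b = 0")
  case False
  then show ?thesis using False assms powr_add[of b "q-1" 1] by simp
next
  case True then show ?thesis by simp
qed

lemma conv_pos:
  fixes a b q :: real
  assumes "q \<ge> 1" "b > 0"
  shows "\<bar>a\<bar> powr q \<ge> b powr q + q * b powr (q-1) * (a - b)"
proof (cases "a \<le> 0")
  case True
  have "b powr q + q * b powr (q-1) * (a - b) = (1-q) * b powr q + q * b powr (q-1) * a"
    using powr_split1[of b q] assms by (simp add: algebra_simps)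
  also have "\<dots> \<le> 0" using True assms
    by (intro add_nonpos_nonpos) (auto simp: mult_nonneg_nonpos mult_nonpos_nonneg)
  finally show ?thesis by (smt (verit) powr_ge_zero)
next
  case False
  have y: "(a powr q) powr (1/q) * (b powr q) powr (1 - 1/q) \<le> (1/q)*(a powr q) + (1-1/q)*(b powr q)"
    using assms by (intro young_w) auto
  have "(a powr q) powr (1/q) = a" using False assms by (simp add: powr_powr)
  moreover have "(b powr q) powr (1 - 1/q) = b powr (q-1)" using assms
    by (simp add: powr_powr algebra_simps)
  ultimately have "a * b powr (q-1) \<le> (1/q)*(a powr q) + (1-1/q)*(b powr q)" using y by simp
  then have "q * (a * b powr (q-1)) \<le> a powr q + (q-1)*(b powr q)" using assms
    by (simp add: field_simps)
  then show ?thesis using powr_split1[of b q] assms False by (simp add: algebra_simps)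
qed

lemma conv_psi:
  fixes a b q :: real
  assumes "q \<ge> 1"
  shows "\<bar>a\<bar> powr q \<ge> \<bar>b\<bar> powr q + q * psi q b * (a - b)"
proof -
  consider "b > 0" | "b = 0" | "b < 0" by linarith
  then show ?thesis
  proof cases
    case 1 then show ?thesis using conv_pos[OF assms 1, of a] by (simp add: psi_def)
  next
    case 2 then show ?thesis by (simp add: psi_def)
  next
    case 3
    have "\<bar>-a\<bar> powr q \<ge> (-b) powr q + q * (-b) powr (q-1) * (-a - -b)"
      using conv_pos[OF assms, of "-b" "-a"] 3 by simp
    then show ?thesis using 3 by (simp add: psi_def algebra_simps)
  qed
qed

lemma powr_sum_le:
  fixes a b r :: real
  assumes "a \<ge> 0" "b \<ge> 0" "r \<ge> 1"
  shows "a powr r + b powr r \<le> (a + b) powr r"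
proof -
  have "a powr r \<le> a * (a+b) powr (r-1)"
    using powr_split1[of a r] assms by (simp add: mult.commute mult_left_mono powr_mono2)
  moreover have "b powr r \<le> b * (a+b) powr (r-1)"
    using powr_split1[of b r] assms by (simp add: mult.commute mult_left_mono powr_mono2)
  ultimately have "a powr r + b powr r \<le> (a+b) * (a+b) powr (r-1)" by (simp add: algebra_simps)
  also have "\<dots> = (a+b) powr r" using powr_split1[of "a+b" r] assms by simp
  finally show ?thesis .
qed



lemma psi_neg: "psi q (-v) = - psi q v" by (simp add: psi_def)

lemma psi_lip_same:
  fixes q u x :: real
  assumes "q \<ge> 2" "0 \<le> x" "x \<le> u"
  shows "\<bar>psi q u - psi q x\<bar> \<le> (q-1) * (\<bar>u\<bar>+\<bar>x\<bar>) powr (q-2) * \<bar>u - x\<bar>"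
proof (cases "u = 0")
  case True then show ?thesis using assms by (simp add: psi_def)
next
  case False
  then have u: "u > 0" using assms by auto
  have c: "\<bar>x\<bar> powr (q-1) \<ge> u powr (q-1) + (q-1) * u powr (q-1-1) * (x - u)"
    using conv_pos[of "q-1" u x] assms u by simp
  have m: "x powr (q-1) \<le> u powr (q-1)" using assms by (intro powr_mono2) auto
  have "psi q u - psi q x = u powr (q-1) - x powr (q-1)"
    using assms u by (cases "x = 0") (auto simp: psi_def)
  then have "\<bar>psi q u - psi q x\<bar> = u powr (q-1) - x powr (q-1)" using m by simp
  also have "\<dots> \<le> (q-1) * u powr (q-2) * (u - x)" using c assms by (simp add: algebra_simps)
  also have "\<dots> \<le> (q-1) * (\<bar>u\<bar>+\<bar>x\<bar>) powr (q-2) * \<bar>u - x\<bar>"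
  proof -
    have "u powr (q-2) \<le> (\<bar>u\<bar>+\<bar>x\<bar>) powr (q-2)" using assms by (intro powr_mono2) auto
    then show ?thesis using assms by (auto intro!: mult_right_mono mult_left_mono)
  qed
  finally show ?thesis .
qed

lemma psi_lip_opp:
  fixes q u x :: real
  assumes "q \<ge> 2" "x \<le> 0" "0 \<le> u"
  shows "\<bar>psi q u - psi q x\<bar> \<le> (q-1) * (\<bar>u\<bar>+\<bar>x\<bar>) powr (q-2) * \<bar>u - x\<bar>"
proof -
  have e: "psi q u - psi q x = u powr (q-1) + \<bar>x\<bar> powr (q-1)"
    using assms by (cases "x = 0"; cases "u = 0") (auto simp: psi_def)
  have "u powr (q-1) + \<bar>x\<bar> powr (q-1) \<le> (u + \<bar>x\<bar>) powr (q-1)"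
    using assms by (intro powr_sum_le) auto
  also have "\<dots> = (u + \<bar>x\<bar>) powr (q-1-1) * (u + \<bar>x\<bar>)" using powr_split1[of "u+\<bar>x\<bar>" "q-1"] assms by simp
  also have "\<dots> \<le> (q-1) * (\<bar>u\<bar>+\<bar>x\<bar>) powr (q-2) * \<bar>u - x\<bar>"
  proof -
    have "(u + \<bar>x\<bar>) powr (q-1-1) * (u + \<bar>x\<bar>) \<le> (q-1) * ((u + \<bar>x\<bar>) powr (q-1-1) * (u + \<bar>x\<bar>))"
      using mult_right_mono[of 1 "q-1" "(u + \<bar>x\<bar>) powr (q-1-1) * (u + \<bar>x\<bar>)"] assms by simp
    then show ?thesis using assms by (simp add: algebra_simps)
  qed
  finally show ?thesis using e by (smt (verit) powr_ge_zero)
qed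

lemma psi_lip:
  fixes q u x :: real
  assumes "q \<ge> 2"
  shows "\<bar>psi q u - psi q x\<bar> \<le> (q-1) * (\<bar>u\<bar>+\<bar>x\<bar>) powr (q-2) * \<bar>u - x\<bar>"
proof -
  have sym: "\<bar>psi q u - psi q x\<bar> = \<bar>psi q x - psi q u\<bar>" "\<bar>u - x\<bar> = \<bar>x - u\<bar>" "\<bar>u\<bar>+\<bar>x\<bar> = \<bar>x\<bar>+\<bar>u\<bar>"
    by auto
  have neg: "\<bar>psi q u - psi q x\<bar> = \<bar>psi q (-u) - psi q (-x)\<bar>" "\<bar>u - x\<bar> = \<bar>(-u) - (-x)\<bar>"
    by (auto simp: psi_neg)
  consider "0 \<le> x" "x \<le> u" | "0 \<le> u" "u \<le> x" | "x \<le> 0" "u \<le> x" | "u \<le> 0" "x \<le> u"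
    | "x \<le> 0" "0 \<le> u" | "u \<le> 0" "0 \<le> x" by linarith
  then show ?thesis
  proof cases
    case 1 then show ?thesis using psi_lip_same assms by blast
  next
    case 2 then show ?thesis using psi_lip_same[of q u x] assms sym by (simp add: add.commute)
  next
    case 3 then show ?thesis using psi_lip_same[of q "-x" "-u"] assms sym neg by (simp add: add.commute)
  next
    case 4 then show ?thesis using psi_lip_same[of q "-u" "-x"] assms neg by (simp add: add.commute)
  next
    case 5 then show ?thesis using psi_lip_opp assms by blast
  next
    case 6 then show ?thesis using psi_lip_opp[of q u x] assms sym by (simp add: add.commute)
  qed
qed

lemma main_ineq:
  fixes q w x :: real
  assumes "q \<ge> 2"
  shows "\<bar>w+x\<bar> powr q \<le> \<bar>w\<bar> powr q + q * psi q w * x + q*(q-1) * (2*\<bar>w\<bar>+\<bar>x\<bar>) powr (q-2) * x\<^sup>2"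
proof -
  have c: "\<bar>w\<bar> powr q \<ge> \<bar>w+x\<bar> powr q + q * psi q (w+x) * (w - (w+x))"
    using conv_psi[where a=w and b="w+x" and q=q] assms by simp
  have l: "\<bar>psi q (w+x) - psi q w\<bar> \<le> (q-1) * (\<bar>w+x\<bar>+\<bar>w\<bar>) powr (q-2) * \<bar>x\<bar>"
    using psi_lip[OF assms, of "w+x" w] by simp
  have "q * psi q (w+x) * x - q * psi q w * x \<le> q * \<bar>psi q (w+x) - psi q w\<bar> * \<bar>x\<bar>"
  proof -
    have "q * (psi q (w+x) - psi q w) * x \<le> \<bar>q * (psi q (w+x) - psi q w) * x\<bar>" by simp
    also have "\<dots> = q * \<bar>psi q (w+x) - psi q w\<bar> * \<bar>x\<bar>" using assms by (simp add: abs_mult)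
    finally show ?thesis by (simp add: algebra_simps)
  qed
  also have "\<dots> \<le> q * ((q-1) * (\<bar>w+x\<bar>+\<bar>w\<bar>) powr (q-2) * \<bar>x\<bar>) * \<bar>x\<bar>"
    using assms l by (intro mult_right_mono mult_left_mono) auto
  also have "\<dots> \<le> q * ((q-1) * (2*\<bar>w\<bar>+\<bar>x\<bar>) powr (q-2) * \<bar>x\<bar>) * \<bar>x\<bar>"
    using assms by (intro mult_right_mono mult_left_mono powr_mono2) auto
  also have "\<dots> = q*(q-1) * (2*\<bar>w\<bar>+\<bar>x\<bar>) powr (q-2) * x\<^sup>2"
    by (simp add: power2_eq_square abs_mult_self_eq mult.assoc[symmetric])
  finally have "q * psi q (w+x) * x - q * psi q w * x \<le> q*(q-1) * (2*\<bar>w\<bar>+\<bar>x\<bar>) powr (q-2) * x\<^sup>2" .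
  moreover have "\<bar>w+x\<bar> powr q \<le> \<bar>w\<bar> powr q + q * psi q (w+x) * x" using c
  proof -
    have "q * psi q (w+x) * (w - (w+x)) = - (q * psi q (w+x) * x)" by (simp add: algebra_simps)
    then show ?thesis using c by linarith
  qed
  ultimately show ?thesis by linarith
qed



lemma young_scaled:
  fixes q t c a b :: real
  assumes "q > 2" "t \<ge> 1" "c > 0" "a \<ge> 0" "b \<ge> 0"
  shows "c * a powr (q-2) * b\<^sup>2 \<le> a powr q / (2*t)
          + c * (2/q) * (2*c*((q-2)/q)) powr (q/2-1) * t powr (q/2-1) * b powr q"
proof -
  define \<theta> where "\<theta> = (q-2)/q"
  have th: "0 < \<theta>" "\<theta> < 1" using assms by (auto simp: \<theta>_def field_simps)
  define lam where "lam = 1/(2*t*c*\<theta>)"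
  have la: "lam > 0" using assms th by (auto simp: lam_def)
  define A where "A = lam * a powr q"
  define B where "B = lam powr (-(q/2-1)) * b powr q"
  have A0: "A \<ge> 0" "B \<ge> 0" using la by (auto simp: A_def B_def)
  have qt: "q * \<theta> = q - 2" using assms by (simp add: \<theta>_def)
  have qt2: "q * (1-\<theta>) = 2" using assms by (simp add: \<theta>_def field_simps)
  have qt3: "-(q/2-1) * (1-\<theta>) = -\<theta>" using assms by (simp add: \<theta>_def field_simps)
  have "A powr \<theta> = lam powr \<theta> * a powr (q-2)"
    using la assms by (simp add: A_def powr_mult powr_powr qt)
  moreover have "B powr (1-\<theta>) = lam powr (-\<theta>) * b\<^sup>2"
  proof -
    have "B powr (1-\<theta>) = lam powr (-(q/2-1) * (1-\<theta>)) * b powr (q * (1-\<theta>))"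
      using la assms by (simp add: B_def powr_mult powr_powr)
    also have "\<dots> = lam powr (-\<theta>) * b powr 2" by (simp only: qt2 qt3)
    also have "b powr 2 = b\<^sup>2" using assms by (cases "b = 0") (auto simp: powr_numeral)
    finally show ?thesis by simp
  qed
  ultimately have "A powr \<theta> * B powr (1-\<theta>) = a powr (q-2) * b\<^sup>2"
    using la by (simp add: powr_minus field_simps)
  then have y: "a powr (q-2) * b\<^sup>2 \<le> \<theta>*A + (1-\<theta>)*B"
    using young_w[of A B \<theta>] A0 th by simp
  have le: "c * a powr (q-2) * b\<^sup>2 \<le> c * (\<theta>*A) + c * ((1-\<theta>)*B)"
    using y assms by (simp add: mult.assoc mult_left_mono distrib_left[symmetric])
  have e1: "c * (\<theta>*A) = a powr q / (2*t)"
    using assms th by (simp add: A_def lam_def field_simps)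
  have e2: "c * ((1-\<theta>)*B) = c * (2/q) * (2*c*((q-2)/q)) powr (q/2-1) * t powr (q/2-1) * b powr q"
  proof -
    have "lam powr (-(q/2-1)) = (2*t*c*\<theta>) powr (q/2-1)"
      using la by (simp add: lam_def powr_minus powr_divide field_simps)
    also have "\<dots> = (2*c*\<theta>) powr (q/2-1) * t powr (q/2-1)"
      using assms th by (simp add: powr_mult[symmetric] ac_simps)
    finally show ?thesis using assms by (simp add: B_def \<theta>_def field_simps)
  qed
  show ?thesis using le e1 e2 by simp
qed



lemma scalar_main:
  fixes q :: real
  assumes q: "q \<ge> 2"
  shows "\<exists>D>0. \<forall>t\<ge>1. \<forall>w x. \<bar>w+x\<bar> powr q \<le> \<bar>w\<bar> powr q + q * psi q w * x + \<bar>w\<bar> powr q / (2*t)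
            + D * t powr (q/2-1) * \<bar>x\<bar> powr q"
proof -
  define c where "c = q*(q-1)*3 powr (q-2)"
  have c0: "c > 0" using q by (simp add: c_def)
  define D where "D = c + c * (2/q) * (2*c*((q-2)/q)) powr (q/2-1)"
  have Dx: "c * (2/q) * (2*c*((q-2)/q)) powr (q/2-1) \<ge> 0" using c0 q by (intro mult_nonneg_nonneg) auto
  have D0: "D > 0" "D \<ge> c" using c0 Dx unfolding D_def by linarith+
  have "\<forall>t\<ge>1. \<forall>w x. \<bar>w+x\<bar> powr q \<le> \<bar>w\<bar> powr q + q * psi q w * x + \<bar>w\<bar> powr q / (2*t)
            + D * t powr (q/2-1) * \<bar>x\<bar> powr q"
  proof (intro allI impI)
    fix t w x :: real assume t: "t \<ge> 1"
    have tp: "t powr (q/2-1) \<ge> 1" using t q by (simp add: ge_one_powr_ge_zero)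
    define M where "M = max \<bar>w\<bar> \<bar>x\<bar>"
    have "(2*\<bar>w\<bar>+\<bar>x\<bar>) powr (q-2) \<le> (3*M) powr (q-2)"
      using q by (intro powr_mono2) (auto simp: M_def)
    also have "\<dots> = 3 powr (q-2) * M powr (q-2)" by (simp add: powr_mult M_def)
    finally have "q*(q-1)*(2*\<bar>w\<bar>+\<bar>x\<bar>) powr (q-2) * x\<^sup>2 \<le> q*(q-1)*(3 powr (q-2) * M powr (q-2)) * x\<^sup>2"
      using q by (intro mult_right_mono mult_left_mono) auto
    then have R: "q*(q-1)*(2*\<bar>w\<bar>+\<bar>x\<bar>) powr (q-2) * x\<^sup>2 \<le> c * M powr (q-2) * x\<^sup>2"
      by (simp add: c_def ac_simps)
    have x2: "x\<^sup>2 = \<bar>x\<bar> powr 2" by (cases "x = 0") (auto simp: powr_numeral)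
    have "c * M powr (q-2) * x\<^sup>2 \<le> \<bar>w\<bar> powr q / (2*t) + D * t powr (q/2-1) * \<bar>x\<bar> powr q"
    proof (cases "\<bar>w\<bar> \<le> \<bar>x\<bar>")
      case True
      then have "M = \<bar>x\<bar>" by (simp add: M_def)
      have xx: "\<bar>x\<bar> powr (q-2) * \<bar>x\<bar> powr 2 = \<bar>x\<bar> powr q"
      proof (cases "x = 0")
        case False then show ?thesis by (simp only: powr_add[symmetric]) simp
      qed simp
      then have "c * M powr (q-2) * x\<^sup>2 = c * \<bar>x\<bar> powr q"
        using \<open>M = \<bar>x\<bar>\<close> by (simp only: x2 mult.assoc)
      also have "\<dots> \<le> D * t powr (q/2-1) * \<bar>x\<bar> powr q"
      proof -
        have "c \<le> D * t powr (q/2-1)" using mult_left_mono[of 1 "t powr (q/2-1)" D] D0 tp by linarith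
        then show ?thesis by (intro mult_right_mono) auto
      qed
      moreover have "\<bar>w\<bar> powr q / (2*t) \<ge> 0" using t by simp
      ultimately show ?thesis by linarith
    next
      case False
      then have M: "M = \<bar>w\<bar>" by (simp add: M_def)
      show ?thesis
      proof (cases "q = 2")
        case True
        have "M \<noteq> 0" using False M by auto
        then have "c * M powr (q-2) * x\<^sup>2 = c * \<bar>x\<bar> powr q" using True by (simp only: x2) simp
        also have "\<dots> \<le> D * t powr (q/2-1) * \<bar>x\<bar> powr q" using True D0 t by (intro mult_right_mono) auto
        moreover have "\<bar>w\<bar> powr q / (2*t) \<ge> 0" using t by simp
      ultimately show ?thesis by linarith
      next
        case False
        then have q2: "q > 2" using q by simp
        have "c * M powr (q-2) * x\<^sup>2 \<le> \<bar>w\<bar> powr q / (2*t)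
          + c * (2/q) * (2*c*((q-2)/q)) powr (q/2-1) * t powr (q/2-1) * \<bar>x\<bar> powr q"
          using young_scaled[OF q2 t c0, of "\<bar>w\<bar>" "\<bar>x\<bar>"] M by simp
        also have "\<dots> \<le> \<bar>w\<bar> powr q / (2*t) + D * t powr (q/2-1) * \<bar>x\<bar> powr q"
        proof -
          have "c * (2/q) * (2*c*((q-2)/q)) powr (q/2-1) \<le> D" using c0 by (simp add: D_def)
          then show ?thesis by (intro add_left_mono mult_right_mono) auto
        qed
        finally show ?thesis .
      qed
    qed
    with R have "q*(q-1)*(2*\<bar>w\<bar>+\<bar>x\<bar>) powr (q-2) * x\<^sup>2 \<le> \<bar>w\<bar> powr q / (2*t) + D * t powr (q/2-1) * \<bar>x\<bar> powr q"
      by linarith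
    then show "\<bar>w+x\<bar> powr q \<le> \<bar>w\<bar> powr q + q * psi q w * x + \<bar>w\<bar> powr q / (2*t)
            + D * t powr (q/2-1) * \<bar>x\<bar> powr q"
      using main_ineq[OF q, of w x] by linarith
  qed
  then show ?thesis using D0 by blast
qed



lemma abs_le_one_powr: "q \<ge> 1 \<Longrightarrow> \<bar>x::real\<bar> \<le> 1 + \<bar>x\<bar> powr q"
proof (cases "\<bar>x\<bar> \<le> 1")
  case False
  assume q: "q \<ge> 1"
  then have "\<bar>x\<bar> powr 1 \<le> \<bar>x\<bar> powr q" using False by (intro powr_mono) auto
  then show ?thesis using False by simp
next
  case True then show ?thesis by (smt (verit) powr_ge_zero)
qed

lemma powr_le_one_powr: "0 \<le> r \<Longrightarrow> r \<le> q \<Longrightarrow> (a::real) \<ge> 0 \<Longrightarrow> a powr r \<le> 1 + a powr q"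
proof (cases "a \<le> 1")
  case True
  assume "0 \<le> r" "a \<ge> 0"
  then have "a powr r \<le> 1" using True by (cases "a = 0") (auto intro: powr_le1)
  then show ?thesis by (smt (verit) powr_ge_zero)
next
  case False
  assume "r \<le> q"
  then have "a powr r \<le> a powr q" using False by (intro powr_mono) auto
  then show ?thesis by simp
qed

context prob_space begin

lemma integrable_from_powr:
  fixes f :: "'a \<Rightarrow> real"
  assumes "f \<in> borel_measurable M" "integrable M (\<lambda>\<omega>. \<bar>f \<omega>\<bar> powr q)" "q \<ge> 1"
  shows "integrable M f"
proof (rule Bochner_Integration.integrable_bound[of _ "\<lambda>\<omega>. 1 + \<bar>f \<omega>\<bar> powr q"])
  show "integrable M (\<lambda>\<omega>. 1 + \<bar>f \<omega>\<bar> powr q)" using assms by auto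
  show "AE x in M. norm (f x) \<le> norm (1 + \<bar>f x\<bar> powr q)"
    using abs_le_one_powr[OF assms(3)] by (auto intro!: AE_I2 simp: abs_of_nonneg add_nonneg_nonneg)
qed (use assms in auto)

lemma integrable_powr_lower:
  fixes f :: "'a \<Rightarrow> real"
  assumes "f \<in> borel_measurable M" "integrable M (\<lambda>\<omega>. \<bar>f \<omega>\<bar> powr q)" "0 \<le> r" "r \<le> q"
  shows "integrable M (\<lambda>\<omega>. \<bar>f \<omega>\<bar> powr r)"
proof (rule Bochner_Integration.integrable_bound[of _ "\<lambda>\<omega>. 1 + \<bar>f \<omega>\<bar> powr q"])
  show "integrable M (\<lambda>\<omega>. 1 + \<bar>f \<omega>\<bar> powr q)" using assms by auto
  show "AE x in M. norm (\<bar>f x\<bar> powr r) \<le> norm (1 + \<bar>f x\<bar> powr q)"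
    using powr_le_one_powr[OF assms(3,4)] by (auto intro!: AE_I2 simp: add_nonneg_nonneg)
qed (use assms in auto)

lemma indep_sum_next:
  fixes X :: "nat \<Rightarrow> 'a \<Rightarrow> real"
  assumes ind: "indep_vars (\<lambda>_. borel) X UNIV"
  shows "indep_var borel (\<lambda>\<omega>. \<Sum>k<n. X k \<omega>) borel (X n)"
proof -
  have "indep_var (PiM {..<n} (\<lambda>_. borel)) (\<lambda>\<omega>. restrict (\<lambda>i. X i \<omega>) {..<n})
                  (PiM {n} (\<lambda>_. borel)) (\<lambda>\<omega>. restrict (\<lambda>i. X i \<omega>) {n})"
    by (rule indep_var_restrict[OF ind]) auto
  then have "indep_var borel ((\<lambda>f. \<Sum>k<n. f k) \<circ> (\<lambda>\<omega>. restrict (\<lambda>i. X i \<omega>) {..<n}))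
                       borel ((\<lambda>f. f n) \<circ> (\<lambda>\<omega>. restrict (\<lambda>i. X i \<omega>) {n}))"
    by (rule indep_var_compose) auto
  moreover have "((\<lambda>f. \<Sum>k<n. f k) \<circ> (\<lambda>\<omega>. restrict (\<lambda>i. X i \<omega>) {..<n})) = (\<lambda>\<omega>. \<Sum>k<n. X k \<omega>)"
    by (auto simp: fun_eq_iff)
  moreover have "((\<lambda>f. f n) \<circ> (\<lambda>\<omega>. restrict (\<lambda>i. X i \<omega>) {n})) = X n"
    by (auto simp: fun_eq_iff)
  ultimately show ?thesis by simp
qed

lemma indep_fun_next:
  fixes X :: "nat \<Rightarrow> 'a \<Rightarrow> real" and g :: "(nat \<Rightarrow> real) \<Rightarrow> real"
  assumes ind: "indep_vars (\<lambda>_. borel) X UNIV"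
    and g: "g \<in> borel_measurable (PiM {..<n} (\<lambda>_. borel))"
  shows "indep_var borel (\<lambda>\<omega>. g (restrict (\<lambda>i. X i \<omega>) {..<n})) borel (X n)"
proof -
  have "indep_var (PiM {..<n} (\<lambda>_. borel)) (\<lambda>\<omega>. restrict (\<lambda>i. X i \<omega>) {..<n})
                  (PiM {n} (\<lambda>_. borel)) (\<lambda>\<omega>. restrict (\<lambda>i. X i \<omega>) {n})"
    by (rule indep_var_restrict[OF ind]) auto
  then have "indep_var borel (g \<circ> (\<lambda>\<omega>. restrict (\<lambda>i. X i \<omega>) {..<n}))
                       borel ((\<lambda>f. f n) \<circ> (\<lambda>\<omega>. restrict (\<lambda>i. X i \<omega>) {n}))"
    by (rule indep_var_compose) (auto simp: g)
  moreover have "((\<lambda>f. f n) \<circ> (\<lambda>\<omega>. restrict (\<lambda>i. X i \<omega>) {n})) = X n"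
    by (auto simp: fun_eq_iff)
  ultimately show ?thesis by (simp add: comp_def)
qed

end


lemma psi_measurable[measurable]: "psi q \<in> borel_measurable borel"
  unfolding psi_def by measurable

lemma abs_psi: "\<bar>psi q w\<bar> = \<bar>w\<bar> powr (q-1)"
  by (cases "w = 0") (auto simp: psi_def abs_mult)

context prob_space begin

lemma mz_step:
  fixes X :: "nat \<Rightarrow> 'a \<Rightarrow> real" and q m D t :: real
  assumes q: "q \<ge> 2" and meas: "\<And>k. X k \<in> borel_measurable M"
    and ind: "indep_vars (\<lambda>_. borel) X UNIV"
    and intq: "\<And>k. integrable M (\<lambda>\<omega>. \<bar>X k \<omega>\<bar> powr q)"
    and mom: "\<And>k. (\<integral>\<omega>. \<bar>X k \<omega>\<bar> powr q \<partial>M) \<le> m"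
    and mean0: "\<And>k. expectation (X k) = 0"
    and D: "\<forall>t\<ge>1. \<forall>w x. \<bar>w+x\<bar> powr q \<le> \<bar>w\<bar> powr q + q * psi q w * x + \<bar>w\<bar> powr q / (2*t)
            + D * t powr (q/2-1) * \<bar>x\<bar> powr q"
    and D0: "D > 0"
    and t: "t \<ge> 1"
    and intn: "integrable M (\<lambda>\<omega>. \<bar>\<Sum>k<n. X k \<omega>\<bar> powr q)"
  shows "integrable M (\<lambda>\<omega>. \<bar>\<Sum>k<Suc n. X k \<omega>\<bar> powr q)"
    "(\<integral>\<omega>. \<bar>\<Sum>k<Suc n. X k \<omega>\<bar> powr q \<partial>M) \<le>
       (\<integral>\<omega>. \<bar>\<Sum>k<n. X k \<omega>\<bar> powr q \<partial>M) * (1 + 1/(2*t)) + D * t powr (q/2-1) * m"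
proof -
  define W where "W = (\<lambda>\<omega>. \<Sum>k<n. X k \<omega>)"
  have Wm[measurable]: "W \<in> borel_measurable M" unfolding W_def using meas by measurable
  have Xm[measurable]: "X n \<in> borel_measurable M" using meas by simp
  have intW: "integrable M (\<lambda>\<omega>. \<bar>W \<omega>\<bar> powr q)" using intn by (simp add: W_def)
  have intpsi: "integrable M (\<lambda>\<omega>. psi q (W \<omega>))"
  proof (rule Bochner_Integration.integrable_bound[of _ "\<lambda>\<omega>. 1 + \<bar>W \<omega>\<bar> powr q"])
    show "integrable M (\<lambda>\<omega>. 1 + \<bar>W \<omega>\<bar> powr q)" using intW by auto
    show "AE x in M. norm (psi q (W x)) \<le> norm (1 + \<bar>W x\<bar> powr q)"
      using powr_le_one_powr[of "q-1" q] q by (auto intro!: AE_I2 simp: abs_psi add_nonneg_nonneg)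
  qed measurable
  have intX: "integrable M (X n)" using integrable_from_powr[OF Xm intq] q by simp
  have indep: "indep_var borel (\<lambda>\<omega>. psi q (W \<omega>)) borel (X n)"
  proof -
    have "indep_var borel (psi q \<circ> W) borel (id \<circ> X n)"
      by (rule indep_var_compose[OF indep_sum_next[OF ind, of n, folded W_def]]) auto
    then show ?thesis by (simp add: comp_def)
  qed
  have intPX: "integrable M (\<lambda>\<omega>. psi q (W \<omega>) * X n \<omega>)"
    by (rule indep_var_integrable[OF indep intpsi intX])
  have EPX: "(\<integral>\<omega>. psi q (W \<omega>) * X n \<omega> \<partial>M) = 0"
    using indep_var_lebesgue_integral[OF indep intpsi intX] mean0[of n] by simp
  define B where "B = (\<lambda>\<omega>. \<bar>W \<omega>\<bar> powr q + q * (psi q (W \<omega>) * X n \<omega>) + \<bar>W \<omega>\<bar> powr q / (2*t)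
            + D * t powr (q/2-1) * \<bar>X n \<omega>\<bar> powr q)"
  have intB: "integrable M B" unfolding B_def using intW intPX intq[of n] by auto
  have WS: "\<And>\<omega>. (\<Sum>k<Suc n. X k \<omega>) = W \<omega> + X n \<omega>" by (simp add: W_def)
  have pt: "\<bar>W \<omega> + X n \<omega>\<bar> powr q \<le> B \<omega>" for \<omega>
    using D t by (simp add: B_def mult.assoc)
  have int1: "integrable M (\<lambda>\<omega>. \<bar>W \<omega> + X n \<omega>\<bar> powr q)"
  proof (rule Bochner_Integration.integrable_bound[OF intB])
    show "AE x in M. norm (\<bar>W x + X n x\<bar> powr q) \<le> norm (B x)"
      using pt by (auto intro!: AE_I2 order_trans[OF _ abs_ge_self])
  qed measurable
  then show "integrable M (\<lambda>\<omega>. \<bar>\<Sum>k<Suc n. X k \<omega>\<bar> powr q)" by (simp only: WS)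
  have "(\<integral>\<omega>. \<bar>\<Sum>k<Suc n. X k \<omega>\<bar> powr q \<partial>M) \<le> integral\<^sup>L M B"
    using int1 intB pt by (simp only: WS) (intro integral_mono, auto)
  also have "integral\<^sup>L M B = (\<integral>\<omega>. \<bar>W \<omega>\<bar> powr q \<partial>M) + q * 0 + (\<integral>\<omega>. \<bar>W \<omega>\<bar> powr q \<partial>M) / (2*t)
       + D * t powr (q/2-1) * (\<integral>\<omega>. \<bar>X n \<omega>\<bar> powr q \<partial>M)"
    unfolding B_def using intW intPX intq[of n] EPX by (simp add: integral_add)
  also have "\<dots> \<le> (\<integral>\<omega>. \<bar>W \<omega>\<bar> powr q \<partial>M) * (1 + 1/(2*t)) + D * t powr (q/2-1) * m"
    using mom[of n] D0 t by (simp add: algebra_simps mult_left_mono)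
  finally show "(\<integral>\<omega>. \<bar>\<Sum>k<Suc n. X k \<omega>\<bar> powr q \<partial>M) \<le>
       (\<integral>\<omega>. \<bar>\<Sum>k<n. X k \<omega>\<bar> powr q \<partial>M) * (1 + 1/(2*t)) + D * t powr (q/2-1) * m"
    by (simp add: W_def)
qed


lemma mz_bound:
  fixes X :: "nat \<Rightarrow> 'a \<Rightarrow> real" and q m :: real
  assumes q: "q \<ge> 2" and meas: "\<And>k. X k \<in> borel_measurable M"
    and ind: "indep_vars (\<lambda>_. borel) X UNIV"
    and intq: "\<And>k. integrable M (\<lambda>\<omega>. \<bar>X k \<omega>\<bar> powr q)"
    and mom: "\<And>k. (\<integral>\<omega>. \<bar>X k \<omega>\<bar> powr q \<partial>M) \<le> m"
    and mean0: "\<And>k. expectation (X k) = 0"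
  shows "\<exists>K. \<forall>n. integrable M (\<lambda>\<omega>. \<bar>\<Sum>k<n. X k \<omega>\<bar> powr q)
            \<and> (\<integral>\<omega>. \<bar>\<Sum>k<n. X k \<omega>\<bar> powr q \<partial>M) \<le> K * real n powr (q/2)"
proof -
  obtain D where D0: "D > 0" and D: "\<forall>t\<ge>1. \<forall>w x. \<bar>w+x\<bar> powr q \<le> \<bar>w\<bar> powr q + q * psi q w * x + \<bar>w\<bar> powr q / (2*t)
            + D * t powr (q/2-1) * \<bar>x\<bar> powr q"
    using scalar_main[OF q] by blast
  note step = mz_step[OF q meas ind intq mom mean0 D D0]
  have m0: "m \<ge> 0" using mom[of 0] Bochner_Integration.integral_nonneg[of M "\<lambda>\<omega>. \<bar>X 0 \<omega>\<bar> powr q"]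
    by (smt (verit) powr_ge_zero)
  have int: "integrable M (\<lambda>\<omega>. \<bar>\<Sum>k<n. X k \<omega>\<bar> powr q)" for n
  proof (induction n)
    case 0 then show ?case by simp
  next
    case (Suc n) then show ?case using step(1)[of 1 n] by simp
  qed
  define K where "K = max m (2*D*m)"
  have K: "m \<le> K" "D * m \<le> K/2" "K \<ge> 0" using m0 by (auto simp: K_def)
  have bnd: "(\<integral>\<omega>. \<bar>\<Sum>k<n. X k \<omega>\<bar> powr q \<partial>M) \<le> K * real n powr (q/2)" for n
  proof (induction n)
    case 0 then show ?case by simp
  next
    case (Suc n)
    show ?case
    proof (cases "n = 0")
      case True
      then show ?thesis using mom[of 0] K by simp
    next
      case False
      then have n1: "real n \<ge> 1" by simp
      define a where "a = real n powr (q/2-1)"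
      have a0: "a \<ge> 0" by (simp add: a_def)
      have na: "real n powr (q/2) = a * real n"
        using n1 powr_split1[of "real n" "q/2"] by (simp add: a_def)
      have "(\<integral>\<omega>. \<bar>\<Sum>k<Suc n. X k \<omega>\<bar> powr q \<partial>M) \<le>
         (\<integral>\<omega>. \<bar>\<Sum>k<n. X k \<omega>\<bar> powr q \<partial>M) * (1 + 1/(2*real n)) + D * real n powr (q/2-1) * m"
        using step(2)[OF n1 int] .
      also have "\<dots> \<le> (K * (a * real n)) * (1 + 1/(2*real n)) + D * a * m"
        using Suc.IH na n1 by (simp add: a_def mult_right_mono)
      also have "\<dots> = K * a * real n + a * (K/2 + D * m)"
        using n1 by (simp add: field_simps)
      also have "\<dots> \<le> K * a * real n + a * K"
        using K a0 by (intro add_left_mono mult_left_mono) auto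
      also have "\<dots> = K * (a * (real n + 1))" by (simp add: algebra_simps)
      also have "\<dots> \<le> K * real (Suc n) powr (q/2)"
      proof -
        have "a \<le> real (Suc n) powr (q/2-1)" unfolding a_def using q by (intro powr_mono2) auto
        then have "a * (real n + 1) \<le> real (Suc n) powr (q/2-1) * real (Suc n)"
        proof -
          have "a * (real n + 1) \<le> real (Suc n) powr (q/2-1) * (real n + 1)"
            using \<open>a \<le> _\<close> by (rule mult_right_mono) simp
          then show ?thesis by (simp add: add.commute)
        qed
        also have "\<dots> = real (Suc n) powr (q/2)" using powr_split1[of "real (Suc n)" "q/2"] by simp
        finally show ?thesis using K by (intro mult_left_mono) auto
      qed
      finally show ?thesis .
    qed
  qed
  show ?thesis using int bnd by blast
qed

end


lemma doob_incr:
  fixes a b q :: real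
  assumes q: "q > 1" and a: "a \<ge> 0" and ab: "a < b"
  shows "b powr q - a powr q \<le> (q/(q-1)) * (b * (b powr (q-1) - a powr (q-1)))"
proof -
  have b0: "b > 0" using a ab by simp
  have key: "q * (a powr (q-1) * b) \<le> b powr q + (q-1) * a powr q"
  proof (cases "a = 0")
    case True then show ?thesis using b0 by simp
  next
    case False
    then have a0: "a > 0" using a by simp
    have "\<bar>b\<bar> powr q \<ge> a powr q + q * a powr (q-1) * (b - a)"
      using conv_pos[where a=b and b=a and q=q] q a0 by simp
    moreover have "a * (q * a powr (q-1)) = q * a powr q" using powr_split1[of a q] a by simp
    ultimately show ?thesis using b0 by (simp add: algebra_simps)
  qed
  have bb: "b * b powr (q-1) = b powr q" using powr_split1[of b q] b0 by simp
  have "(q-1) * (b powr q - a powr q) \<le> q * (b * (b powr (q-1) - a powr (q-1)))"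
    using key bb by (simp add: algebra_simps)
  then show ?thesis using q by (simp add: field_simps)
qed

lemma doob_path1:
  fixes x :: "nat \<Rightarrow> real" and q :: real
  assumes q: "q > 1" and x0: "\<And>k. x k \<ge> 0"
  shows "(Max (x ` {..N})) powr q \<le> (q/(q-1)) * (x N * (Max (x ` {..N})) powr (q-1)
          - (\<Sum>k<N. (Max (x ` {..k})) powr (q-1) * (x (Suc k) - x k)))"
proof (induction N)
  case 0
  have "x 0 powr q = x 0 * x 0 powr (q-1)" using powr_split1[of "x 0" q] x0 by simp
  moreover have "x 0 * x 0 powr (q-1) \<le> (q/(q-1)) * (x 0 * x 0 powr (q-1))"
  proof -
    have "1 \<le> q/(q-1)" using q by simp
    from mult_right_mono[OF this, of "x 0 * x 0 powr (q-1)"] show ?thesis using x0[of 0] by simp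
  qed
  ultimately show ?case by simp
next
  case (Suc N)
  define a where "a = Max (x ` {..N})"
  have a0: "a \<ge> 0" using x0 by (auto simp: a_def intro: order_trans[OF _ Max_ge[of _ "x 0"]])
  have mS: "Max (x ` {..Suc N}) = max a (x (Suc N))"
    by (simp add: a_def atMost_Suc image_insert Max_insert max.commute)
  have inc: "(max a (x (Suc N))) powr q - a powr q \<le>
      (q/(q-1)) * (x (Suc N) * ((max a (x (Suc N))) powr (q-1) - a powr (q-1)))"
  proof (cases "x (Suc N) \<le> a")
    case True then show ?thesis by (simp add: max_def)
  next
    case False
    then show ?thesis using doob_incr[OF q a0, of "x (Suc N)"] by (simp add: max_def)
  qed
  have "(max a (x (Suc N))) powr q \<le> a powr q + (q/(q-1)) * (x (Suc N) * ((max a (x (Suc N))) powr (q-1) - a powr (q-1)))"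
    using inc by simp
  also have "\<dots> \<le> (q/(q-1)) * (x N * a powr (q-1) - (\<Sum>k<N. (Max (x ` {..k})) powr (q-1) * (x (Suc k) - x k)))
      + (q/(q-1)) * (x (Suc N) * ((max a (x (Suc N))) powr (q-1) - a powr (q-1)))"
    using Suc.IH by (simp add: a_def)
  also have "\<dots> = (q/(q-1)) * (x (Suc N) * (max a (x (Suc N))) powr (q-1)
          - (\<Sum>k<Suc N. (Max (x ` {..k})) powr (q-1) * (x (Suc k) - x k)))"
    by (simp add: a_def algebra_simps)
  finally show ?case by (simp add: mS)
qed

lemma doob_path:
  fixes x :: "nat \<Rightarrow> real" and q :: real
  assumes q: "q > 1" and x0: "\<And>k. x k \<ge> 0"
  shows "(Max (x ` {..N})) powr q \<le> 2 powr q / (q-1) * x N powr q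
          - (2*q/(q-1)) * (\<Sum>k<N. (Max (x ` {..k})) powr (q-1) * (x (Suc k) - x k))"
proof -
  define m where "m = Max (x ` {..N})"
  define S where "S = (\<Sum>k<N. (Max (x ` {..k})) powr (q-1) * (x (Suc k) - x k))"
  have m0: "m \<ge> 0" using x0 by (auto simp: m_def intro: order_trans[OF _ Max_ge[of _ "x 0"]])
  have p: "m powr q \<le> (q/(q-1)) * (x N * m powr (q-1) - S)"
    using doob_path1[OF q x0, where N=N] by (simp add: m_def S_def)
  define A where "A = 2 powr (q-1) * x N powr q"
  define B where "B = m powr q / 2"
  have AB: "A \<ge> 0" "B \<ge> 0" by (auto simp: A_def B_def)
  have y: "A powr (1/q) * B powr (1 - 1/q) \<le> (1/q)*A + (1-1/q)*B"
    using q AB by (intro young_w) auto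
  have "A powr (1/q) = 2 powr ((q-1)/q) * x N"
    using q x0[of N] by (simp add: A_def powr_mult powr_powr)
  moreover have "B powr (1 - 1/q) = m powr (q-1) / 2 powr ((q-1)/q)"
  proof -
    have e: "q * (1 - 1/q) = q - 1" "1 - 1/q = (q-1)/q" using q by (auto simp: field_simps)
    have "B powr (1 - 1/q) = (m powr q) powr (1 - 1/q) / 2 powr (1 - 1/q)"
      using m0 by (simp add: B_def powr_divide)
    also have "(m powr q) powr (1 - 1/q) = m powr (q-1)" using q by (simp add: powr_powr e)
    finally show ?thesis by (simp add: e)
  qed
  ultimately have "A powr (1/q) * B powr (1 - 1/q) = x N * m powr (q-1)"
    by (simp add: field_simps)
  then have y2: "x N * m powr (q-1) \<le> 2 powr (q-1) * x N powr q / q + (q-1)/q * (m powr q / 2)"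
  proof -
    have "1 - 1/q = (q-1)/q" using q by (simp add: field_simps)
    then show ?thesis using y \<open>A powr (1/q) * B powr (1 - 1/q) = x N * m powr (q-1)\<close>
      by (simp add: A_def B_def)
  qed
  define c where "c = q/(q-1)"
  define U where "U = 2 powr (q-1) * x N powr q"
  have c1: "c * (U / q) = U / (q-1)" "c * ((q-1)/q) = 1" using q by (auto simp: c_def)
  have "c * (x N * m powr (q-1)) \<le> c * (U / q + (q-1)/q * (m powr q / 2))"
    using y2 q by (intro mult_left_mono) (auto simp: c_def U_def)
  also have "\<dots> = c * (U / q) + (c * ((q-1)/q)) * (m powr q / 2)" by (simp add: algebra_simps)
  finally have "c * (x N * m powr (q-1)) \<le> U / (q-1) + m powr q / 2" using c1 by simp
  moreover have "m powr q \<le> c * (x N * m powr (q-1)) - c * S" using p by (simp add: c_def right_diff_distrib)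
  ultimately have "m powr q \<le> 2 * (U / (q-1)) - 2 * (c * S)" by linarith
  then have "m powr q \<le> 2 * (2 powr (q-1) / (q-1) * x N powr q) - (2*q/(q-1)) * S"
    by (simp add: U_def c_def)
  also have "2 * (2 powr (q-1) / (q-1) * x N powr q) = 2 powr q / (q-1) * x N powr q"
    using powr_split1[of 2 q] by simp
  finally show ?thesis by (simp add: m_def S_def)
qed



lemma abs_add_ge_sgn: "\<bar>w + y\<bar> - \<bar>w\<bar> \<ge> sgn w * (y::real)"
  by (cases "w > 0"; cases "w < 0") auto

lemma Max_powr_le_sum:
  fixes x :: "nat \<Rightarrow> real" and q :: real
  assumes "\<And>k. x k \<ge> 0" "q \<ge> 0"
  shows "(Max (x ` {..n})) powr q \<le> (\<Sum>j\<le>n. x j powr q)"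
proof -
  have "Max (x ` {..n}) \<in> x ` {..n}" by (rule Max_in) auto
  then obtain j where j: "j \<in> {..n}" "Max (x ` {..n}) = x j" by (rule imageE) simp
  then show ?thesis
    using member_le_sum[of j "{..n}" "\<lambda>j. x j powr q"] assms by simp
qed

lemma Max_abs_nonneg: fixes f :: "nat \<Rightarrow> real" shows "Max ((\<lambda>k. \<bar>f k\<bar>) ` {..n}) \<ge> (0::real)"
  by (rule order_trans[OF _ Max_ge[of _ "\<bar>f 0\<bar>"]]) auto

lemma meas_partial_sum:
  fixes j k :: nat
  assumes "j \<le> k"
  shows "(\<lambda>f. \<Sum>i<j. f i :: real) \<in> borel_measurable (PiM {..<k} (\<lambda>_. borel))"
proof (rule borel_measurable_sum)
  fix i assume "i \<in> {..<j}"
  then have "i \<in> {..<k}" using assms by auto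
  then show "(\<lambda>f. f i :: real) \<in> borel_measurable (PiM {..<k} (\<lambda>_. borel))"
    by (rule measurable_component_singleton)
qed

context prob_space begin

lemma max_walk_bound:
  fixes X :: "nat \<Rightarrow> 'a \<Rightarrow> real" and q m :: real
  assumes q: "q \<ge> 2" and meas: "\<And>k. X k \<in> borel_measurable M"
    and ind: "indep_vars (\<lambda>_. borel) X UNIV"
    and intq: "\<And>k. integrable M (\<lambda>\<omega>. \<bar>X k \<omega>\<bar> powr q)"
    and mom: "\<And>k. (\<integral>\<omega>. \<bar>X k \<omega>\<bar> powr q \<partial>M) \<le> m"
    and mean0: "\<And>k. expectation (X k) = 0"
  shows "\<exists>C. \<forall>n. integrable M (\<lambda>\<omega>. (Max ((\<lambda>k. \<bar>\<Sum>j<k. X j \<omega>\<bar>) ` {..n})) powr q)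
            \<and> (\<integral>\<omega>. (Max ((\<lambda>k. \<bar>\<Sum>j<k. X j \<omega>\<bar>) ` {..n})) powr q \<partial>M) \<le> C * real n powr (q/2)"
proof -
  obtain K where K: "\<And>n. integrable M (\<lambda>\<omega>. \<bar>\<Sum>k<n. X k \<omega>\<bar> powr q)"
     "\<And>n. (\<integral>\<omega>. \<bar>\<Sum>k<n. X k \<omega>\<bar> powr q \<partial>M) \<le> K * real n powr (q/2)"
    using mz_bound[OF q meas ind intq mom mean0] by blast
  define W where "W k \<omega> = (\<Sum>j<k. X j \<omega>)" for k \<omega>
  have Wm[measurable]: "W k \<in> borel_measurable M" for k unfolding W_def using meas by measurable
  have Xm[measurable]: "X k \<in> borel_measurable M" for k using meas by simp
  define mx where "mx k \<omega> = Max ((\<lambda>j. \<bar>W j \<omega>\<bar>) ` {..k})" for k \<omega>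
  have mxm[measurable]: "mx k \<in> borel_measurable M" for k unfolding mx_def by measurable
  have mx0: "mx k \<omega> \<ge> 0" for k \<omega> unfolding mx_def by (rule Max_abs_nonneg)
  have mxq: "mx k \<omega> powr q \<le> (\<Sum>j\<le>k. \<bar>W j \<omega>\<bar> powr q)" for k \<omega>
    unfolding mx_def using q by (intro Max_powr_le_sum) auto
  have int_mx: "integrable M (\<lambda>\<omega>. mx k \<omega> powr q)" for k
  proof (rule Bochner_Integration.integrable_bound[of _ "\<lambda>\<omega>. \<Sum>j\<le>k. \<bar>W j \<omega>\<bar> powr q"])
    show "integrable M (\<lambda>\<omega>. \<Sum>j\<le>k. \<bar>W j \<omega>\<bar> powr q)" using K(1) by (auto simp: W_def)
    show "AE x in M. norm (mx k x powr q) \<le> norm (\<Sum>j\<le>k. \<bar>W j x\<bar> powr q)"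
      using mxq by (auto intro!: AE_I2 order_trans[OF _ abs_ge_self])
  qed measurable
  define h where "h k \<omega> = mx k \<omega> powr (q-1) * sgn (W k \<omega>)" for k \<omega>
  have hm[measurable]: "h k \<in> borel_measurable M" for k unfolding h_def by measurable
  have int_h: "integrable M (h k)" for k
  proof (rule Bochner_Integration.integrable_bound[of _ "\<lambda>\<omega>. 1 + mx k \<omega> powr q"])
    show "integrable M (\<lambda>\<omega>. 1 + mx k \<omega> powr q)" using int_mx by auto
    have "\<bar>h k \<omega>\<bar> \<le> 1 + mx k \<omega> powr q" for \<omega>
    proof -
      have "\<bar>h k \<omega>\<bar> \<le> mx k \<omega> powr (q-1)" unfolding h_def
        by (auto simp: abs_mult sgn_if)
      also have "\<dots> \<le> 1 + mx k \<omega> powr q" using powr_le_one_powr[of "q-1" q] q mx0 by simp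
      finally show ?thesis .
    qed
    then show "AE x in M. norm (h k x) \<le> norm (1 + mx k x powr q)"
      by (auto intro!: AE_I2 order_trans[OF _ abs_ge_self])
  qed measurable
  have intX: "integrable M (X k)" for k using integrable_from_powr[OF Xm intq] q by simp
  have indep_h: "indep_var borel (h k) borel (X k)" for k
  proof -
    define g where "g f = Max ((\<lambda>j. \<bar>\<Sum>i<j. f i\<bar>) ` {..k}) powr (q-1) * sgn (\<Sum>i<k. f i)"
      for f :: "nat \<Rightarrow> real"
    have gm: "g \<in> borel_measurable (PiM {..<k} (\<lambda>_. borel))"
    proof -
      have a: "(\<lambda>f. \<bar>\<Sum>i<j. f i :: real\<bar>) \<in> borel_measurable (PiM {..<k} (\<lambda>_. borel))" if "j \<in> {..k}" for j
        using that by (intro borel_measurable_abs meas_partial_sum) auto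
      have b: "(\<lambda>f. Max ((\<lambda>j. \<bar>\<Sum>i<j. f i :: real\<bar>) ` {..k})) \<in> borel_measurable (PiM {..<k} (\<lambda>_. borel))"
        using borel_measurable_Max[of "{..k}" "\<lambda>j f. \<bar>\<Sum>i<j. f i :: real\<bar>", OF _ a] by simp
      have c: "(\<lambda>f. sgn (\<Sum>i<k. f i :: real)) \<in> borel_measurable (PiM {..<k} (\<lambda>_. borel))"
        using measurable_compose[OF meas_partial_sum[of k k] borel_measurable_sgn] by (simp add: comp_def)
      show ?thesis unfolding g_def
        by (intro borel_measurable_times powr_real_measurable b c) auto
    qed
    have "h k \<omega> = g (restrict (\<lambda>i. X i \<omega>) {..<k})" for \<omega>
    proof -
      have s: "(\<Sum>i<j. restrict (\<lambda>i. X i \<omega>) {..<k} i) = W j \<omega>" if "j \<le> k" for j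
        using that by (auto simp: W_def intro!: sum.cong)
      have "(\<lambda>j. \<bar>\<Sum>i<j. restrict (\<lambda>i. X i \<omega>) {..<k} i\<bar>) ` {..k} = (\<lambda>j. \<bar>W j \<omega>\<bar>) ` {..k}"
        using s by (intro image_cong) auto
      then show ?thesis using s[of k] by (simp add: g_def h_def mx_def)
    qed
    then have "h k = (\<lambda>\<omega>. g (restrict (\<lambda>i. X i \<omega>) {..<k}))" by auto
    then show ?thesis using indep_fun_next[OF ind gm] by simp
  qed
  have EhX: "(\<integral>\<omega>. h k \<omega> * X k \<omega> \<partial>M) = 0" for k
    using indep_var_lebesgue_integral[OF indep_h int_h intX] mean0[of k] by simp
  have int_hX: "integrable M (\<lambda>\<omega>. h k \<omega> * X k \<omega>)" for k
    by (rule indep_var_integrable[OF indep_h int_h intX])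
  define C where "C = 2 powr q / (q-1) * K"
  have "integrable M (\<lambda>\<omega>. (Max ((\<lambda>k. \<bar>\<Sum>j<k. X j \<omega>\<bar>) ` {..n})) powr q)
      \<and> (\<integral>\<omega>. (Max ((\<lambda>k. \<bar>\<Sum>j<k. X j \<omega>\<bar>) ` {..n})) powr q \<partial>M) \<le> C * real n powr (q/2)" for n
  proof -
    have eq: "(\<lambda>\<omega>. (Max ((\<lambda>k. \<bar>\<Sum>j<k. X j \<omega>\<bar>) ` {..n})) powr q) = (\<lambda>\<omega>. mx n \<omega> powr q)"
      by (simp add: mx_def W_def)
    define G where "G \<omega> = 2 powr q / (q-1) * \<bar>W n \<omega>\<bar> powr q - (2*q/(q-1)) * (\<Sum>k<n. h k \<omega> * X k \<omega>)" for \<omega>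
    have pt: "mx n \<omega> powr q \<le> G \<omega>" for \<omega>
    proof -
      have "mx n \<omega> powr q \<le> 2 powr q / (q-1) * \<bar>W n \<omega>\<bar> powr q
          - (2*q/(q-1)) * (\<Sum>k<n. mx k \<omega> powr (q-1) * (\<bar>W (Suc k) \<omega>\<bar> - \<bar>W k \<omega>\<bar>))"
        using doob_path[of q "\<lambda>k. \<bar>W k \<omega>\<bar>" n] q by (simp add: mx_def)
      moreover have "(\<Sum>k<n. h k \<omega> * X k \<omega>) \<le> (\<Sum>k<n. mx k \<omega> powr (q-1) * (\<bar>W (Suc k) \<omega>\<bar> - \<bar>W k \<omega>\<bar>))"
      proof (rule sum_mono)
        fix k
        have "sgn (W k \<omega>) * X k \<omega> \<le> \<bar>W (Suc k) \<omega>\<bar> - \<bar>W k \<omega>\<bar>"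
          using abs_add_ge_sgn[of "W k \<omega>" "X k \<omega>"] by (simp add: W_def)
        then have "mx k \<omega> powr (q-1) * (sgn (W k \<omega>) * X k \<omega>) \<le> mx k \<omega> powr (q-1) * (\<bar>W (Suc k) \<omega>\<bar> - \<bar>W k \<omega>\<bar>)"
          by (intro mult_left_mono) auto
        then show "h k \<omega> * X k \<omega> \<le> mx k \<omega> powr (q-1) * (\<bar>W (Suc k) \<omega>\<bar> - \<bar>W k \<omega>\<bar>)"
          by (simp add: h_def mult.assoc)
      qed
      moreover have "2*q/(q-1) \<ge> 0" using q by simp
      ultimately show ?thesis unfolding G_def by (smt (verit) mult_left_mono)
    qed
    have intG: "integrable M G" unfolding G_def using K(1)[of n] int_hX by (auto simp: W_def)
    have int1: "integrable M (\<lambda>\<omega>. mx n \<omega> powr q)" by (rule int_mx)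
    have "(\<integral>\<omega>. mx n \<omega> powr q \<partial>M) \<le> integral\<^sup>L M G"
      using int1 intG pt by (intro integral_mono) auto
    also have "integral\<^sup>L M G = 2 powr q / (q-1) * (\<integral>\<omega>. \<bar>W n \<omega>\<bar> powr q \<partial>M)"
      unfolding G_def using K(1)[of n] int_hX EhX by (simp add: W_def integral_sum)
    also have "\<dots> \<le> 2 powr q / (q-1) * (K * real n powr (q/2))"
      using K(2)[of n] q by (intro mult_left_mono) (auto simp: W_def)
    finally show ?thesis using int1 eq by (simp add: C_def)
  qed
  then show ?thesis by blast
qed

end


definition rot :: "real^2 \<Rightarrow> real^2" where "rot u = vector [- u$2, u$1]"

lemma inner2: "(x::real^2) \<bullet> y = x$1 * y$1 + x$2 * y$2"
  by (simp add: inner_vec_def sum_2)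

lemma norm2_sq: "norm (u::real^2) = 1 \<Longrightarrow> u$1 * u$1 + u$2 * u$2 = 1"
  using inner2[of u u] by (simp add: dot_square_norm)

definition Tr :: "real^2 \<Rightarrow> real^2 \<Rightarrow> real^2" where
  "Tr u s = (s$1) *\<^sub>R u + (s$2) *\<^sub>R rot u"

lemma Tr_orth:
  assumes "norm u = 1"
  shows "orthogonal_transformation (Tr u)"
proof -
  have n: "u$1 * u$1 + u$2 * u$2 = 1" using norm2_sq[OF assms] .
  have lin: "linear (Tr u)"
    by (rule linearI) (auto simp: Tr_def algebra_simps)
  have "Tr u v \<bullet> Tr u w = v \<bullet> w" for v w
  proof -
    have "Tr u v \<bullet> Tr u w = (v$1 * w$1 + v$2 * w$2) * (u$1 * u$1 + u$2 * u$2)"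
      by (simp add: Tr_def rot_def inner2 algebra_simps)
    then show ?thesis using n by (simp add: inner2)
  qed
  then show ?thesis using lin by (simp add: orthogonal_transformation_def)
qed

lemma Tr_decomp:
  assumes "norm u = 1"
  shows "y = Tr u (vector [y \<bullet> u, y \<bullet> rot u])"
proof -
  have n: "u$1 * u$1 + u$2 * u$2 = 1" using norm2_sq[OF assms] .
  have "y$i = Tr u (vector [y \<bullet> u, y \<bullet> rot u]) $ i" for i
  proof -
    have "i = 1 \<or> i = 2" using exhaust_2 by auto
    moreover have "y$1 = y$1 * (u$1 * u$1 + u$2 * u$2)" "y$2 = y$2 * (u$1 * u$1 + u$2 * u$2)" using n by auto
    ultimately show ?thesis by (auto simp: Tr_def rot_def inner2 algebra_simps)
  qed
  then show ?thesis by (simp add: vec_eq_iff)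
qed

lemma hull_area_le:
  fixes P :: "(real^2) set" and u :: "real^2"
  assumes fin: "finite P" and u: "norm u = 1" and a: "a \<ge> 0" and b: "b \<ge> 0"
    and bd: "\<And>x. x \<in> P \<Longrightarrow> \<bar>x \<bullet> u\<bar> \<le> a \<and> \<bar>x \<bullet> rot u\<bar> \<le> b"
  shows "measure lborel (convex hull P) \<le> 4 * a * b"
proof -
  define R where "R = {y::real^2. \<bar>y \<bullet> u\<bar> \<le> a \<and> \<bar>y \<bullet> rot u\<bar> \<le> b}"
  have "R = {y. u \<bullet> y \<le> a} \<inter> {y. (-u) \<bullet> y \<le> a} \<inter> {y. rot u \<bullet> y \<le> b} \<inter> {y. (- rot u) \<bullet> y \<le> b}"
    by (auto simp: R_def abs_le_iff inner_commute)
  then have cR: "convex R"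
    by (simp only:) (intro convex_Int convex_halfspace_le)
  have sub: "convex hull P \<subseteq> R"
    by (rule hull_minimal) (use bd cR in \<open>auto simp: R_def\<close>)
  define box where "box = cbox (vector [-a, -b]) (vector [a, b] :: real^2)"
  have RT: "R \<subseteq> Tr u ` box"
  proof
    fix y assume "y \<in> R"
    then have "vector [y \<bullet> u, y \<bullet> rot u] \<in> box"
      by (auto simp: box_def mem_box_cart forall_2 R_def abs_le_iff)
    then show "y \<in> Tr u ` box" using Tr_decomp[OF u, of y] by blast
  qed
  have orth: "orthogonal_transformation (Tr u)" by (rule Tr_orth[OF u])
  have boxm: "box \<in> lmeasurable" by (simp add: box_def)
  have Tm: "Tr u ` box \<in> lmeasurable" by (rule measurable_orthogonal_image[OF orth boxm])
  have hull_borel: "convex hull P \<in> sets borel"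
    using fin by (intro borel_closed compact_imp_closed compact_convex_hull finite_imp_compact)
  have "measure lborel (convex hull P) = measure lebesgue (convex hull P)"
    using hull_borel by simp
  also have "\<dots> \<le> measure lebesgue (Tr u ` box)"
    using sub RT hull_borel Tm by (intro measure_mono_fmeasurable) auto
  also have "\<dots> = measure lebesgue box" by (rule measure_orthogonal_image[OF orth boxm])
  also have "\<dots> = measure lborel box" by (simp add: box_def)
  also have "\<dots> = 4 * a * b"
  proof -
    have "0 \<in> box" using a b by (simp add: box_def mem_box_cart forall_2)
    then have "box \<noteq> {}" by auto
    then have "measure lborel box = (\<Prod>i\<in>UNIV. (vector [a, b] :: real^2)$i - (vector [-a, -b] :: real^2)$i)"
      unfolding box_def by (rule content_cbox_cart)
    also have "\<dots> = 4 * a * b" by (simp add: UNIV_2)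
    finally show ?thesis .
  qed
  finally show ?thesis .
qed


lemma hull_char:
  fixes P :: "(real^2) set" and D :: "(real^2) set"
  assumes fin: "finite P" and dense: "\<And>X. open X \<Longrightarrow> X \<noteq> {} \<Longrightarrow> \<exists>d\<in>D. d \<in> X"
  shows "y \<in> convex hull P \<longleftrightarrow> (\<forall>d\<in>D. \<exists>x\<in>P. d \<bullet> y \<le> d \<bullet> x)"
proof
  assume y: "y \<in> convex hull P"
  show "\<forall>d\<in>D. \<exists>x\<in>P. d \<bullet> y \<le> d \<bullet> x"
  proof (rule ccontr)
    assume "\<not> ?thesis"
    then obtain d where "d \<in> D" "\<And>x. x \<in> P \<Longrightarrow> d \<bullet> x < d \<bullet> y" by (auto simp: not_le)
    then have "P \<subseteq> {z. d \<bullet> z < d \<bullet> y}" by auto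
    then have "convex hull P \<subseteq> {z. d \<bullet> z < d \<bullet> y}"
      by (intro hull_minimal) (auto simp: convex_halfspace_lt)
    then show False using y by auto
  qed
next
  assume r: "\<forall>d\<in>D. \<exists>x\<in>P. d \<bullet> y \<le> d \<bullet> x"
  show "y \<in> convex hull P"
  proof (rule ccontr)
    assume ny: "y \<notin> convex hull P"
    have "closed (convex hull P)" using fin by (intro compact_imp_closed compact_convex_hull finite_imp_compact)
    then obtain a c where ac: "a \<bullet> y < c" "\<And>x. x \<in> convex hull P \<Longrightarrow> c < a \<bullet> x"
      using separating_hyperplane_closed_point[OF convex_convex_hull _ ny] by blast
    define Op where "Op = (\<Inter>x\<in>P. {d::real^2. (x - y) \<bullet> d < 0})"
    have "open Op" unfolding Op_def using fin by (intro open_INT) (auto intro: open_halfspace_lt)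
    moreover have "- a \<in> Op"
    proof -
      have "(x - y) \<bullet> (- a) < 0" if "x \<in> P" for x
      proof -
        have "c < a \<bullet> x" using ac(2) hull_subset[of P convex] that by blast
        then show ?thesis using ac(1) by (simp add: inner_diff_left inner_diff_right inner_commute)
      qed
      then show ?thesis by (simp add: Op_def)
    qed
    ultimately obtain d where "d \<in> D" "d \<in> Op" using dense by blast
    then obtain x where "x \<in> P" "d \<bullet> y \<le> d \<bullet> x" using r by blast
    with \<open>d \<in> Op\<close> show False by (auto simp: Op_def inner_diff_right inner_commute)
  qed
qed

lemma hull_area_measurable:
  assumes meas: "\<And>k. Z k \<in> borel_measurable M"
  shows "hull_area Z n \<in> borel_measurable M"
proof -
  obtain D :: "(real^2) set" where D: "countable D" "\<And>X. open X \<Longrightarrow> X \<noteq> {} \<Longrightarrow> \<exists>d\<in>D. d \<in> X"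
    using countable_dense_setE by blast
  have wm[measurable]: "(\<lambda>\<omega>. walk Z k \<omega>) \<in> borel_measurable M" for k
    unfolding walk_def using meas by measurable
  define Q where "Q = {p \<in> space (M \<Otimes>\<^sub>M lborel). \<forall>d\<in>D. \<exists>k\<in>{..n}. d \<bullet> snd p \<le> d \<bullet> walk Z k (fst p)}"
  have Q: "Q \<in> sets (M \<Otimes>\<^sub>M lborel)"
    unfolding Q_def using D(1) by measurable
  have eq: "Pair \<omega> -` Q = convex hull {walk Z k \<omega> | k. k \<le> n}" if "\<omega> \<in> space M" for \<omega>
  proof -
    have P: "{walk Z k \<omega> | k. k \<le> n} = (\<lambda>k. walk Z k \<omega>) ` {..n}" by auto
    have fin: "finite {walk Z k \<omega> | k. k \<le> n}" unfolding P by simp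
    show ?thesis
      using hull_char[OF fin D(2)] that unfolding Q_def P by (auto simp: space_pair_measure)
  qed
  have "(\<lambda>\<omega>. emeasure lborel (Pair \<omega> -` Q)) \<in> borel_measurable M"
    by (rule lborel.measurable_emeasure_Pair[OF Q])
  then have "(\<lambda>\<omega>. enn2real (emeasure lborel (Pair \<omega> -` Q))) \<in> borel_measurable M"
    by measurable
  then show ?thesis
    by (rule measurable_cong[THEN iffD1, rotated]) (simp add: hull_area_def eq measure_def)
qed



lemma add_powr_le:
  fixes a b q :: real
  assumes "a \<ge> 0" "b \<ge> 0" "q \<ge> 0"
  shows "(a + b) powr q \<le> 2 powr q * (a powr q + b powr q)"
proof -
  have "(a + b) powr q \<le> (2 * max a b) powr q" using assms by (intro powr_mono2) auto
  also have "\<dots> = 2 powr q * (max a b) powr q" using assms by (simp add: powr_mult)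
  also have "(max a b) powr q \<le> a powr q + b powr q" by (simp add: max_def)
  then have "2 powr q * (max a b) powr q \<le> 2 powr q * (a powr q + b powr q)" by (intro mult_left_mono) auto
  finally show ?thesis .
qed

context prob_space begin

lemma dir_walk:
  fixes Z :: "nat \<Rightarrow> 'a \<Rightarrow> real^2" and q :: real and v :: "real^2"
  assumes meas: "\<And>k. Z k \<in> borel_measurable M"
    and ind: "indep_vars (\<lambda>_. borel) Z UNIV"
    and dist: "\<And>k. distr M borel (Z k) = distr M borel (Z 0)"
    and q: "q \<ge> 2"
    and int0: "integrable M (\<lambda>\<omega>. norm (Z 0 \<omega>) powr q)"
    and v: "norm v = 1"
  shows "\<exists>C. \<forall>n. integrable M (\<lambda>\<omega>. (Max ((\<lambda>k. \<bar>\<Sum>j<k. (Z j \<omega> - integral\<^sup>L M (Z 0)) \<bullet> v\<bar>) ` {..n})) powr q)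
        \<and> (\<integral>\<omega>. (Max ((\<lambda>k. \<bar>\<Sum>j<k. (Z j \<omega> - integral\<^sup>L M (Z 0)) \<bullet> v\<bar>) ` {..n})) powr q \<partial>M) \<le> C * real n powr (q/2)"
proof -
  define \<mu> where "\<mu> = integral\<^sup>L M (Z 0)"
  have Zm[measurable]: "Z k \<in> borel_measurable M" for k by (rule meas)
  have intk: "integrable M (\<lambda>\<omega>. norm (Z k \<omega>) powr q)" for k
  proof -
    have "integrable (distr M borel (Z 0)) (\<lambda>z. norm z powr q)"
      using int0 by (subst integrable_distr_eq) auto
    then have "integrable (distr M borel (Z k)) (\<lambda>z. norm z powr q)" by (simp add: dist[of k])
    then show ?thesis by (subst (asm) integrable_distr_eq) auto
  qed
  have momk: "(\<integral>\<omega>. norm (Z k \<omega>) powr q \<partial>M) = (\<integral>\<omega>. norm (Z 0 \<omega>) powr q \<partial>M)" for k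
  proof -
    have "(\<integral>\<omega>. norm (Z k \<omega>) powr q \<partial>M) = integral\<^sup>L (distr M borel (Z k)) (\<lambda>z. norm z powr q)"
      by (subst integral_distr) auto
    also have "\<dots> = integral\<^sup>L (distr M borel (Z 0)) (\<lambda>z. norm z powr q)" by (simp add: dist[of k])
    also have "\<dots> = (\<integral>\<omega>. norm (Z 0 \<omega>) powr q \<partial>M)" by (subst integral_distr) auto
    finally show ?thesis .
  qed
  have intZ: "integrable M (Z k)" for k
  proof (rule Bochner_Integration.integrable_bound[of _ "\<lambda>\<omega>. 1 + norm (Z k \<omega>) powr q"])
    show "integrable M (\<lambda>\<omega>. 1 + norm (Z k \<omega>) powr q)" using intk by auto
    show "AE x in M. norm (Z k x) \<le> norm (1 + norm (Z k x) powr q)"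
    proof (intro AE_I2)
      fix x
      have "\<bar>norm (Z k x)\<bar> \<le> 1 + \<bar>norm (Z k x)\<bar> powr q" using abs_le_one_powr[where x="norm (Z k x)" and q=q] q by linarith
      then show "norm (Z k x) \<le> norm (1 + norm (Z k x) powr q)" by simp
    qed
  qed measurable
  have EZ: "integral\<^sup>L M (Z k) = \<mu>" for k
  proof -
    have "integral\<^sup>L M (Z k) = integral\<^sup>L (distr M borel (Z k)) (\<lambda>z. z)"
      by (subst integral_distr) auto
    also have "\<dots> = integral\<^sup>L (distr M borel (Z 0)) (\<lambda>z. z)" by (simp add: dist[of k])
    also have "\<dots> = \<mu>" by (subst integral_distr) (auto simp: \<mu>_def)
    finally show ?thesis .
  qed
  define X where "X j \<omega> = (Z j \<omega> - \<mu>) \<bullet> v" for j \<omega>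
  have Xm: "X k \<in> borel_measurable M" for k unfolding X_def by measurable
  have indX: "indep_vars (\<lambda>_. borel) X UNIV"
    unfolding X_def by (rule indep_vars_compose2[OF ind]) measurable
  define m where "m = 2 powr q * ((\<integral>\<omega>. norm (Z 0 \<omega>) powr q \<partial>M) + norm \<mu> powr q)"
  have Xb: "\<bar>X k \<omega>\<bar> powr q \<le> 2 powr q * (norm (Z k \<omega>) powr q + norm \<mu> powr q)" for k \<omega>
  proof -
    have "\<bar>X k \<omega>\<bar> \<le> norm (Z k \<omega> - \<mu>) * norm v" unfolding X_def by (rule Cauchy_Schwarz_ineq2)
    also have "\<dots> \<le> norm (Z k \<omega>) + norm \<mu>" using v norm_triangle_ineq4 by simp
    finally have "\<bar>X k \<omega>\<bar> powr q \<le> (norm (Z k \<omega>) + norm \<mu>) powr q" using q by (intro powr_mono2) auto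
    also have "\<dots> \<le> 2 powr q * (norm (Z k \<omega>) powr q + norm \<mu> powr q)" using q by (intro add_powr_le) auto
    finally show ?thesis .
  qed
  have intX: "integrable M (\<lambda>\<omega>. \<bar>X k \<omega>\<bar> powr q)" for k
  proof (rule Bochner_Integration.integrable_bound[of _ "\<lambda>\<omega>. 2 powr q * (norm (Z k \<omega>) powr q + norm \<mu> powr q)"])
    show "integrable M (\<lambda>\<omega>. 2 powr q * (norm (Z k \<omega>) powr q + norm \<mu> powr q))" using intk by auto
    show "AE x in M. norm (\<bar>X k x\<bar> powr q) \<le> norm (2 powr q * (norm (Z k x) powr q + norm \<mu> powr q))"
      using Xb by (auto intro!: AE_I2)
  qed (use Xm in measurable)
  have momX: "(\<integral>\<omega>. \<bar>X k \<omega>\<bar> powr q \<partial>M) \<le> m" for k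
  proof -
    have "(\<integral>\<omega>. \<bar>X k \<omega>\<bar> powr q \<partial>M) \<le> (\<integral>\<omega>. 2 powr q * (norm (Z k \<omega>) powr q + norm \<mu> powr q) \<partial>M)"
      using intX intk Xb by (intro integral_mono) auto
    also have "\<dots> = m" using intk[of k] momk[of k] by (simp add: m_def prob_space)
    finally show ?thesis .
  qed
  have mean: "expectation (X k) = 0" for k
  proof -
    have "expectation (X k) = (\<integral>\<omega>. Z k \<omega> \<bullet> v \<partial>M) - (\<integral>\<omega>. \<mu> \<bullet> v \<partial>M)"
      unfolding X_def inner_diff_left using intZ[of k] by (intro Bochner_Integration.integral_diff) auto
    also have "\<dots> = 0" using intZ[of k] EZ[of k] by (simp add: prob_space)
    finally show ?thesis .
  qed
  obtain C where C: "\<forall>n. integrable M (\<lambda>\<omega>. (Max ((\<lambda>k. \<bar>\<Sum>j<k. X j \<omega>\<bar>) ` {..n})) powr q)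
            \<and> (\<integral>\<omega>. (Max ((\<lambda>k. \<bar>\<Sum>j<k. X j \<omega>\<bar>) ` {..n})) powr q \<partial>M) \<le> C * real n powr (q/2)"
    using max_walk_bound[OF q Xm indX intX momX mean] by blast
  then show ?thesis unfolding X_def \<mu>_def by blast
qed

end


lemma walk_inner:
  "walk Z k \<omega> \<bullet> v = (\<Sum>j<k. (Z j \<omega> - \<mu>) \<bullet> v) + real k * (\<mu> \<bullet> v)"
  by (simp add: walk_def inner_sum_left inner_diff_left sum_subtractf)

lemma norm_rot: "norm (rot u) = norm u"
  by (simp add: norm_eq_sqrt_inner inner2 rot_def algebra_simps)

lemma rot_scale: "rot (c *\<^sub>R u) = c *\<^sub>R rot u"
  by (simp add: rot_def vec_eq_iff forall_2)

lemma inner_rot_self: "u \<bullet> rot u = 0"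
  by (simp add: inner2 rot_def)

lemma xy_le: "x \<ge> 0 \<Longrightarrow> y \<ge> 0 \<Longrightarrow> x * y \<le> x\<^sup>2 + (y::real)\<^sup>2"
proof -
  have "0 \<le> (x - y)\<^sup>2" by simp
  then have "2 * (x * y) \<le> x\<^sup>2 + y\<^sup>2" by (simp add: power2_eq_square algebra_simps)
  moreover assume "x \<ge> 0" "y \<ge> 0"
  ultimately show ?thesis by (smt (verit) mult_nonneg_nonneg)
qed

lemma y_le: "y \<ge> 0 \<Longrightarrow> s > 0 \<Longrightarrow> y \<le> y\<^sup>2 / s + (s::real)"
proof (cases "y \<le> s")
  case True
  assume "y \<ge> 0" "s > 0"
  moreover have "y\<^sup>2 / s \<ge> 0" using \<open>s > 0\<close> by simp
  ultimately show ?thesis using True by linarith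
next
  case False
  assume "y \<ge> 0" "s > 0"
  then have "y * s \<le> y * y" using False by (intro mult_left_mono) auto
  then have "y \<le> y\<^sup>2 / s" using \<open>s > 0\<close> by (simp add: power2_eq_square field_simps)
  then show ?thesis using \<open>s > 0\<close> by simp
qed



lemma combine_ineq:
  fixes A \<alpha> \<beta> L s p :: real
  assumes p: "p \<ge> 1" and A: "0 \<le> A" "A \<le> 4 * (\<alpha> + L) * \<beta>" and nn: "\<alpha> \<ge> 0" "\<beta> \<ge> 0" "L \<ge> 0" and s: "s > 0"
  shows "A powr p \<le> 8 powr p * (\<alpha> powr (2*p) + \<beta> powr (2*p) + L powr p * (\<beta> powr (2*p) / s + s))"
proof -
  have sq: "(x powr p)\<^sup>2 = x powr (2*p)" if "x \<ge> 0" for x :: real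
  proof -
    have "(x powr p)\<^sup>2 = x powr p * x powr p" by (simp add: power2_eq_square)
    also have "\<dots> = x powr (2*p)" by (simp add: powr_add[symmetric])
    finally show ?thesis .
  qed
  have h1: "A powr p \<le> 4 powr p * (\<alpha> * \<beta> + L * \<beta>) powr p"
  proof -
    have "A powr p \<le> (4 * (\<alpha> * \<beta> + L * \<beta>)) powr p" using A p by (intro powr_mono2) (auto simp: algebra_simps)
    also have "\<dots> = 4 powr p * (\<alpha> * \<beta> + L * \<beta>) powr p" using nn by (subst powr_mult) auto
    finally show ?thesis .
  qed
  have h2: "(\<alpha> * \<beta> + L * \<beta>) powr p \<le> 2 powr p * ((\<alpha> * \<beta>) powr p + (L * \<beta>) powr p)"
    using nn p by (intro add_powr_le) auto
  have h3: "(\<alpha> * \<beta>) powr p \<le> \<alpha> powr (2*p) + \<beta> powr (2*p)"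
  proof -
    have "(\<alpha> * \<beta>) powr p = \<alpha> powr p * \<beta> powr p" using nn by (simp add: powr_mult)
    also have "\<dots> \<le> (\<alpha> powr p)\<^sup>2 + (\<beta> powr p)\<^sup>2" by (rule xy_le) auto
    finally show ?thesis using sq nn by simp
  qed
  have h4: "(L * \<beta>) powr p \<le> L powr p * (\<beta> powr (2*p) / s + s)"
  proof -
    have "(L * \<beta>) powr p = L powr p * \<beta> powr p" using nn by (simp add: powr_mult)
    moreover have "\<beta> powr p \<le> (\<beta> powr p)\<^sup>2 / s + s" by (rule y_le) (use s in auto)
    ultimately show ?thesis using sq nn by (simp add: mult_left_mono)
  qed
  have "2 powr p * ((\<alpha> * \<beta>) powr p + (L * \<beta>) powr p) \<le>
        2 powr p * (\<alpha> powr (2*p) + \<beta> powr (2*p) + L powr p * (\<beta> powr (2*p) / s + s))"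
    using h3 h4 by (intro mult_left_mono) auto
  with h2 have "(\<alpha> * \<beta> + L * \<beta>) powr p \<le> 2 powr p * (\<alpha> powr (2*p) + \<beta> powr (2*p) + L powr p * (\<beta> powr (2*p) / s + s))"
    by linarith
  then have "4 powr p * (\<alpha> * \<beta> + L * \<beta>) powr p \<le> 4 powr p * (2 powr p * (\<alpha> powr (2*p) + \<beta> powr (2*p) + L powr p * (\<beta> powr (2*p) / s + s)))"
    by (intro mult_left_mono) auto
  also have "\<dots> = 8 powr p * (\<alpha> powr (2*p) + \<beta> powr (2*p) + L powr p * (\<beta> powr (2*p) / s + s))"
    by (simp add: mult.assoc[symmetric] powr_mult[symmetric])
  finally show ?thesis using h1 by linarith
qed



theorem lemma3p2:
  fixes M :: "'a measure" and Z :: "nat \<Rightarrow> 'a \<Rightarrow> real^2" and p :: real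
  assumes "prob_space M"
    and "\<And>k. Z k \<in> borel_measurable M"
    and "prob_space.indep_vars M (\<lambda>_. borel) Z UNIV"
    and "\<And>k. distr M borel (Z k) = distr M borel (Z 0)"
    and "p \<ge> 1"
    and "integrable M (\<lambda>\<omega>. norm (Z 0 \<omega>) powr (2 * p))"
  shows "(\<forall>n. integrable M (\<lambda>\<omega>. hull_area Z n \<omega> powr p))
    \<and> (\<lambda>n. integral\<^sup>L M (\<lambda>\<omega>. hull_area Z n \<omega> powr p)) \<in> O(\<lambda>n. real n powr (3 * p / 2))
    \<and> (integral\<^sup>L M (Z 0) = 0 \<longrightarrow>
         (\<lambda>n. integral\<^sup>L M (\<lambda>\<omega>. hull_area Z n \<omega> powr p)) \<in> O(\<lambda>n. real n powr p))"
proof -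
  interpret prob_space M by (rule assms(1))
  have p: "p \<ge> 1" by (rule assms(5))
  define q where "q = 2*p"
  have q: "q \<ge> 2" using p by (simp add: q_def)
  have int0: "integrable M (\<lambda>\<omega>. norm (Z 0 \<omega>) powr q)" using assms(6) by (simp add: q_def)
  have Zm[measurable]: "Z k \<in> borel_measurable M" for k by (rule assms(2))
  define \<mu> where "\<mu> = integral\<^sup>L M (Z 0)"
  define u where "u = (if \<mu> = 0 then axis 1 1 else (1/norm \<mu>) *\<^sub>R \<mu>)"
  have u: "norm u = 1" by (auto simp: u_def)
  have ru: "norm (rot u) = 1" using u norm_rot by simp
  have mu_rot: "\<mu> \<bullet> rot u = 0"
  proof (cases "\<mu> = 0")
    case False
    then have "rot u = (1/norm \<mu>) *\<^sub>R rot \<mu>" by (simp add: u_def rot_scale)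
    then show ?thesis using inner_rot_self[of \<mu>] by simp
  qed simp
  have mu_u: "\<bar>\<mu> \<bullet> u\<bar> \<le> norm \<mu>" using Cauchy_Schwarz_ineq2[of \<mu> u] u by simp
  obtain C1 where C1: "\<And>n. integrable M (\<lambda>\<omega>. (Max ((\<lambda>k. \<bar>\<Sum>j<k. (Z j \<omega> - \<mu>) \<bullet> u\<bar>) ` {..n})) powr q)"
     "\<And>n. (\<integral>\<omega>. (Max ((\<lambda>k. \<bar>\<Sum>j<k. (Z j \<omega> - \<mu>) \<bullet> u\<bar>) ` {..n})) powr q \<partial>M) \<le> C1 * real n powr (q/2)"
    using dir_walk[OF assms(2,3,4) q int0 u] unfolding \<mu>_def by blast
  obtain C2 where C2: "\<And>n. integrable M (\<lambda>\<omega>. (Max ((\<lambda>k. \<bar>\<Sum>j<k. (Z j \<omega> - \<mu>) \<bullet> rot u\<bar>) ` {..n})) powr q)"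
     "\<And>n. (\<integral>\<omega>. (Max ((\<lambda>k. \<bar>\<Sum>j<k. (Z j \<omega> - \<mu>) \<bullet> rot u\<bar>) ` {..n})) powr q \<partial>M) \<le> C2 * real n powr (q/2)"
    using dir_walk[OF assms(2,3,4) q int0 ru] unfolding \<mu>_def by blast
  define \<alpha> where "\<alpha> n \<omega> = Max ((\<lambda>k. \<bar>\<Sum>j<k. (Z j \<omega> - \<mu>) \<bullet> u\<bar>) ` {..n})" for n \<omega>
  define \<beta> where "\<beta> n \<omega> = Max ((\<lambda>k. \<bar>\<Sum>j<k. (Z j \<omega> - \<mu>) \<bullet> rot u\<bar>) ` {..n})" for n \<omega>
  have \<alpha>0: "\<alpha> n \<omega> \<ge> 0" for n \<omega> unfolding \<alpha>_def by (rule Max_abs_nonneg)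
  have \<beta>0: "\<beta> n \<omega> \<ge> 0" for n \<omega> unfolding \<beta>_def by (rule Max_abs_nonneg)
  have geo: "hull_area Z n \<omega> \<le> 4 * (\<alpha> n \<omega> + real n * norm \<mu>) * \<beta> n \<omega>" for n \<omega>
  proof -
    define P where "P = {walk Z k \<omega> | k. k \<le> n}"
    have P: "P = (\<lambda>k. walk Z k \<omega>) ` {..n}" by (auto simp: P_def)
    have fin: "finite P" unfolding P by simp
    have bd: "\<bar>x \<bullet> u\<bar> \<le> \<alpha> n \<omega> + real n * norm \<mu> \<and> \<bar>x \<bullet> rot u\<bar> \<le> \<beta> n \<omega>" if xP: "x \<in> P" for x
    proof -
      obtain k where k: "k \<le> n" "x = walk Z k \<omega>" using xP by (auto simp: P_def)
      have s1: "\<bar>\<Sum>j<k. (Z j \<omega> - \<mu>) \<bullet> u\<bar> \<le> \<alpha> n \<omega>"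
        unfolding \<alpha>_def using k(1) by (intro Max_ge) auto
      have s2: "\<bar>\<Sum>j<k. (Z j \<omega> - \<mu>) \<bullet> rot u\<bar> \<le> \<beta> n \<omega>"
        unfolding \<beta>_def using k(1) by (intro Max_ge) auto
      have "\<bar>real k * (\<mu> \<bullet> u)\<bar> \<le> real n * norm \<mu>"
        using k(1) mu_u by (simp add: abs_mult) (intro mult_mono, auto)
      then have "\<bar>x \<bullet> u\<bar> \<le> \<alpha> n \<omega> + real n * norm \<mu>"
      proof -
        have "x \<bullet> u = (\<Sum>j<k. (Z j \<omega> - \<mu>) \<bullet> u) + real k * (\<mu> \<bullet> u)"
          using walk_inner[of Z k \<omega> u \<mu>] k(2) by simp
        then show ?thesis using s1 \<open>\<bar>real k * (\<mu> \<bullet> u)\<bar> \<le> _\<close>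
            abs_triangle_ineq[of "\<Sum>j<k. (Z j \<omega> - \<mu>) \<bullet> u" "real k * (\<mu> \<bullet> u)"] by linarith
      qed
      moreover have "\<bar>x \<bullet> rot u\<bar> \<le> \<beta> n \<omega>"
        using s2 walk_inner[of Z k \<omega> "rot u" \<mu>] k(2) mu_rot by simp
      ultimately show ?thesis by blast
    qed
    have "measure lborel (convex hull P) \<le> 4 * (\<alpha> n \<omega> + real n * norm \<mu>) * \<beta> n \<omega>"
      by (rule hull_area_le[OF fin u _ \<beta>0 bd]) (use \<alpha>0 in \<open>auto intro!: add_nonneg_nonneg\<close>)
    then show ?thesis by (simp add: hull_area_def P_def)
  qed
  have A0: "hull_area Z n \<omega> \<ge> 0" for n \<omega> by (simp add: hull_area_def)
  have pw: "hull_area Z n \<omega> powr p \<le> 8 powr p * (\<alpha> n \<omega> powr q + \<beta> n \<omega> powr q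
        + (real n * norm \<mu>) powr p * (\<beta> n \<omega> powr q / s + s))" if "s > 0" for n \<omega> s
    unfolding q_def using combine_ineq[OF p A0 geo \<alpha>0 \<beta>0 _ that] by simp
  have intB: "integrable M (\<lambda>\<omega>. 8 powr p * (\<alpha> n \<omega> powr q + \<beta> n \<omega> powr q
        + (real n * norm \<mu>) powr p * (\<beta> n \<omega> powr q / s + s)))" for n s
    using C1(1)[of n] C2(1)[of n] unfolding \<alpha>_def \<beta>_def by auto
  have Am: "(\<lambda>\<omega>. hull_area Z n \<omega> powr p) \<in> borel_measurable M" for n
    using hull_area_measurable[OF assms(2), where n=n] by measurable
  have intA: "integrable M (\<lambda>\<omega>. hull_area Z n \<omega> powr p)" for n
  proof (rule Bochner_Integration.integrable_bound[OF intB[of n 1] Am])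
    show "AE x in M. norm (hull_area Z n x powr p) \<le> norm (8 powr p * (\<alpha> n x powr q + \<beta> n x powr q
        + (real n * norm \<mu>) powr p * (\<beta> n x powr q / 1 + 1)))"
    proof (intro AE_I2)
      fix x
      have "hull_area Z n x powr p \<le> 8 powr p * (\<alpha> n x powr q + \<beta> n x powr q
        + (real n * norm \<mu>) powr p * (\<beta> n x powr q / 1 + 1))"
        by (rule pw) simp
      then show "norm (hull_area Z n x powr p) \<le> norm (8 powr p * (\<alpha> n x powr q + \<beta> n x powr q
        + (real n * norm \<mu>) powr p * (\<beta> n x powr q / 1 + 1)))"
        by (smt (verit) powr_ge_zero real_norm_def)
    qed
  qed
  have Inn: "0 \<le> (\<integral>\<omega>. f \<omega> powr q \<partial>M)" for f :: "'a \<Rightarrow> real"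
    by (rule Bochner_Integration.integral_nonneg) simp
  have one: "C * real 1 powr (q/2) = C" for C :: real by simp
  have C1nn: "C1 \<ge> 0" using C1(2)[of 1] Inn[of "\<alpha> 1"] unfolding \<alpha>_def one by linarith
  have C2nn: "C2 \<ge> 0" using C2(2)[of 1] Inn[of "\<beta> 1"] unfolding \<beta>_def one by linarith
  have qp: "q/2 = p" by (simp add: q_def)
  have bound: "(\<integral>\<omega>. hull_area Z n \<omega> powr p \<partial>M) \<le>
       8 powr p * ((C1 + C2) * real n powr p + norm \<mu> powr p * (C2 + 1) * real n powr (3*p/2))"
    if n1: "n \<ge> 1" for n
  proof -
    define N where "N = real n"
    have N: "N \<ge> 1" using n1 by (simp add: N_def)
    define s where "s = N powr (p/2)"
    have s0: "s > 0" using N by (simp add: s_def)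
    define Lp where "Lp = (real n * norm \<mu>) powr p"
    have Lp0: "Lp \<ge> 0" by (simp add: Lp_def)
    define I1 where "I1 = (\<integral>\<omega>. \<alpha> n \<omega> powr q \<partial>M)"
    define I2 where "I2 = (\<integral>\<omega>. \<beta> n \<omega> powr q \<partial>M)"
    have I1: "I1 \<le> C1 * N powr p" using C1(2)[of n] unfolding I1_def \<alpha>_def N_def qp .
    have I2: "I2 \<le> C2 * N powr p" using C2(2)[of n] unfolding I2_def \<beta>_def N_def qp .
    have ia: "integrable M (\<lambda>\<omega>. \<alpha> n \<omega> powr q)" using C1(1)[of n] unfolding \<alpha>_def .
    have ib: "integrable M (\<lambda>\<omega>. \<beta> n \<omega> powr q)" using C2(1)[of n] unfolding \<beta>_def .
    have "(\<integral>\<omega>. hull_area Z n \<omega> powr p \<partial>M) \<le> (\<integral>\<omega>. 8 powr p * (\<alpha> n \<omega> powr q + \<beta> n \<omega> powr q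
        + (real n * norm \<mu>) powr p * (\<beta> n \<omega> powr q / s + s)) \<partial>M)"
      using intA[of n] intB[of n s] pw[OF s0] by (intro integral_mono) auto
    also have "\<dots> = 8 powr p * (I1 + I2 + Lp * (I2 / s + s))"
      using ia ib by (simp add: I1_def I2_def Lp_def prob_space)
    also have "\<dots> \<le> 8 powr p * (C1 * N powr p + C2 * N powr p + Lp * (C2 * N powr p / s + s))"
    proof -
      have "I2 / s \<le> C2 * N powr p / s" using I2 s0 by (simp add: divide_right_mono)
      then have "Lp * (I2 / s + s) \<le> Lp * (C2 * N powr p / s + s)" using Lp0 by (intro mult_left_mono) auto
      then show ?thesis using I1 I2 by (intro mult_left_mono) auto
    qed
    also have "Lp * (C2 * N powr p / s + s) = norm \<mu> powr p * (C2 + 1) * N powr (3*p/2)"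
    proof -
      have e1: "N powr p / s = N powr (p/2)" using N by (simp add: s_def powr_diff[symmetric])
      have e2: "N powr p * N powr (p/2) = N powr (3*p/2)" using N by (simp add: powr_add[symmetric])
      have "Lp = N powr p * norm \<mu> powr p" by (simp add: Lp_def N_def powr_mult)
      then have "Lp * (C2 * N powr p / s + s) = norm \<mu> powr p * (N powr p * (C2 * (N powr p / s) + s))"
        by (simp add: algebra_simps)
      also have "\<dots> = norm \<mu> powr p * (C2 + 1) * (N powr p * N powr (p/2))"
        unfolding e1 by (simp add: s_def algebra_simps)
      finally show ?thesis by (simp add: e2)
    qed
    finally show ?thesis by (simp add: N_def algebra_simps)
  qed
  have Enn: "0 \<le> (\<integral>\<omega>. hull_area Z n \<omega> powr p \<partial>M)" for n
    by (rule Bochner_Integration.integral_nonneg) simp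
  have part2: "(\<lambda>n. integral\<^sup>L M (\<lambda>\<omega>. hull_area Z n \<omega> powr p)) \<in> O(\<lambda>n. real n powr (3 * p / 2))"
  proof (rule bigoI[where c="8 powr p * (C1 + C2 + norm \<mu> powr p * (C2 + 1))"])
    show "\<forall>\<^sub>F n in at_top. norm (integral\<^sup>L M (\<lambda>\<omega>. hull_area Z n \<omega> powr p))
        \<le> 8 powr p * (C1 + C2 + norm \<mu> powr p * (C2 + 1)) * norm (real n powr (3 * p / 2))"
      unfolding eventually_at_top_linorder
    proof (intro exI allI impI)
      fix n :: nat assume n1: "n \<ge> 1"
      have m: "real n powr p \<le> real n powr (3*p/2)" using n1 p by (intro powr_mono) auto
      have "(C1 + C2) * real n powr p \<le> (C1 + C2) * real n powr (3*p/2)"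
        using m C1nn C2nn by (intro mult_left_mono) auto
      then have "8 powr p * ((C1 + C2) * real n powr p + norm \<mu> powr p * (C2 + 1) * real n powr (3*p/2))
          \<le> 8 powr p * ((C1 + C2) * real n powr (3*p/2) + norm \<mu> powr p * (C2 + 1) * real n powr (3*p/2))"
        by (intro mult_left_mono) auto
      also have "\<dots> = 8 powr p * (C1 + C2 + norm \<mu> powr p * (C2 + 1)) * real n powr (3 * p / 2)"
        by (simp add: algebra_simps)
      finally have "8 powr p * ((C1 + C2) * real n powr p + norm \<mu> powr p * (C2 + 1) * real n powr (3*p/2))
          \<le> 8 powr p * (C1 + C2 + norm \<mu> powr p * (C2 + 1)) * real n powr (3 * p / 2)" .
      then show "norm (integral\<^sup>L M (\<lambda>\<omega>. hull_area Z n \<omega> powr p))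
        \<le> 8 powr p * (C1 + C2 + norm \<mu> powr p * (C2 + 1)) * norm (real n powr (3 * p / 2))"
        using bound[OF n1] Enn[of n] unfolding real_norm_def abs_of_nonneg[OF Enn] abs_of_nonneg[OF powr_ge_zero]
        by linarith
    qed
  qed
  have part3: "(\<lambda>n. integral\<^sup>L M (\<lambda>\<omega>. hull_area Z n \<omega> powr p)) \<in> O(\<lambda>n. real n powr p)"
    if mu0: "integral\<^sup>L M (Z 0) = 0"
  proof (rule bigoI[where c="8 powr p * (C1 + C2)"])
    have mz: "norm \<mu> powr p = 0" using mu0 by (simp add: \<mu>_def)
    show "\<forall>\<^sub>F n in at_top. norm (integral\<^sup>L M (\<lambda>\<omega>. hull_area Z n \<omega> powr p))
        \<le> 8 powr p * (C1 + C2) * norm (real n powr p)"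
      unfolding eventually_at_top_linorder
    proof (intro exI allI impI)
      fix n :: nat assume n1: "n \<ge> 1"
      show "norm (integral\<^sup>L M (\<lambda>\<omega>. hull_area Z n \<omega> powr p))
        \<le> 8 powr p * (C1 + C2) * norm (real n powr p)"
        using bound[OF n1] Enn[of n] mz by (simp add: algebra_simps)
    qed
  qed
  show ?thesis using intA part2 part3 by blast
qed



end
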